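(* Let $n\ge p$, $\nu>0$, $\boldsymbol\eta\in\mathbb R^p$ with $\max_j\eta_j<1$, and fix $d_2,\dots,d_p>0$. Let $g_1(d_1)=\exp(\nu\eta_1d_1)/\left[{}_0F_1\!\left(\tfrac n2,\tfrac{D^2}{4}\right)\right]^\nu$ (with $D=\mathrm{diag}(d_1,d_2,\dots,d_p)$) be the unnormalized conditional density of $d_1$ given $(d_2,\dots,d_p)$ under IMDY$(\nu,\boldsymbol\eta)$, and let $m$ be its mode. Then for every $b>0$, the function $Q(d_1)=g_1(d_1+b)/g_1(d_1)$ is strictly decreasing for $d_1>m$.
   Context: $\mathcal V_{n,p}=\{X\in\mathbb R^{n\times p}:X^TX=I_p\}$ with normalized Haar probability measure $[dX]$; ${}_0F_1\!\left(\tfrac n2,\tfrac{D^2}{4}\right)=\int_{\mathcal V_{n,p}}\exp\big(\sum_j d_jX_{jj}\big)[dX]$. IMDY$(\nu,\boldsymbol\eta)$ is the distribution on $\mathbb R_+^p$ with Lebesgue density proportional to $\exp(\nu\boldsymbol\eta^T\boldsymbol d)/[{}_0F_1(\tfrac n2,\tfrac{D^2}4)]^\nu$. *)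

theory Defs
  imports "HOL-Probability.Probability"
begin

text \<open>Real n x p matrices are represented as extensional functions on index pairs
  {..<n} x {..<p} (0-based indices), i.e. elements of the product measurable space.\<close>

definition mat_space :: "nat \<Rightarrow> nat \<Rightarrow> (nat \<times> nat \<Rightarrow> real) measure" where
  "mat_space n p = PiM ({..<n} \<times> {..<p}) (\<lambda>_. borel)"

definition stiefel :: "nat \<Rightarrow> nat \<Rightarrow> (nat \<times> nat \<Rightarrow> real) set" where
  "stiefel n p = {X \<in> space (mat_space n p).
      \<forall>j<p. \<forall>k<p. (\<Sum>i<n. X (i, j) * X (i, k)) = (if j = k then 1 else 0)}"

definition orthogonal_mat :: "nat \<Rightarrow> (nat \<times> nat \<Rightarrow> real) \<Rightarrow> bool" where
  "orthogonal_mat n Q \<longleftrightarrow>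
      (\<forall>j<n. \<forall>k<n. (\<Sum>i<n. Q (i, j) * Q (i, k)) = (if j = k then 1 else 0))"

definition left_mult :: "nat \<Rightarrow> nat \<Rightarrow> (nat \<times> nat \<Rightarrow> real) \<Rightarrow> (nat \<times> nat \<Rightarrow> real)
    \<Rightarrow> (nat \<times> nat \<Rightarrow> real)" where
  "left_mult n p Q X = (\<lambda>(i, j) \<in> {..<n} \<times> {..<p}. \<Sum>k<n. Q (i, k) * X (k, j))"

text \<open>The normalized Haar (uniform) probability measure on V_{n,p}: a probability
  measure concentrated on V_{n,p} and invariant under left multiplication by
  orthogonal matrices (such a measure is unique).\<close>
definition haar_stiefel :: "nat \<Rightarrow> nat \<Rightarrow> (nat \<times> nat \<Rightarrow> real) measure \<Rightarrow> bool" where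
  "haar_stiefel n p \<mu> \<longleftrightarrow>
      prob_space \<mu> \<and> sets \<mu> = sets (mat_space n p) \<and> emeasure \<mu> (stiefel n p) = 1 \<and>
      (\<forall>Q. orthogonal_mat n Q \<longrightarrow> distr \<mu> (mat_space n p) (left_mult n p Q) = \<mu>)"

text \<open>0F1(n/2, D^2/4) = \<integral>_{V_{n,p}} exp(\<Sum>_j d_j X_jj) [dX], for D = diag(d_1..d_p)
  (here d 0, ..., d (p-1)), with \<mu> the Haar measure on V_{n,p}.\<close>
definition hyp0F1 :: "(nat \<times> nat \<Rightarrow> real) measure \<Rightarrow> nat \<Rightarrow> (nat \<Rightarrow> real) \<Rightarrow> real" where
  "hyp0F1 \<mu> p d = (\<integral>X. exp (\<Sum>j<p. d j * X (j, j)) \<partial>\<mu>)"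

text \<open>Unnormalized conditional density of d_1 (index 0) given the other d_j
  under IMDY(nu, eta).\<close>
definition g1 :: "(nat \<times> nat \<Rightarrow> real) measure \<Rightarrow> nat \<Rightarrow> real \<Rightarrow> (nat \<Rightarrow> real)
    \<Rightarrow> (nat \<Rightarrow> real) \<Rightarrow> real \<Rightarrow> real" where
  "g1 \<mu> p \<nu> \<eta> d x = exp (\<nu> * \<eta> 0 * x) / (hyp0F1 \<mu> p (d(0 := x))) powr \<nu>"

end

theory Submission
  imports Defs
begin


lemma exp_strict_aux:
  fixes y :: real assumes y: "y \<noteq> 0" shows "1 + y < exp y"
proof (cases "1 + y/2 \<ge> 0")
  case True
  have "(1 + y/2)^2 \<le> exp (y/2) ^2"
    using True by (intro power_mono) (auto simp: exp_ge_add_one_self)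
  also have "exp (y/2)^2 = exp y" by (simp flip: exp_of_nat_mult)
  finally have "(1 + y/2)^2 \<le> exp y" .
  moreover have "(1 + y/2)^2 = 1 + y + y^2/4" by (simp add: power2_eq_square field_simps)
  moreover have "y^2 > 0" using y by simp
  ultimately show ?thesis by linarith
next
  case False
  then have "1 + y < 0" by (simp add: field_simps)
  then show ?thesis using exp_gt_zero[of y] by linarith
qed

lemma exp_strict_convex:
  fixes a b s :: real
  assumes "a \<noteq> b" "0 < s" "s < 1"
  shows "exp (s*a + (1-s)*b) < s * exp a + (1-s) * exp b"
proof -
  define m where "m = s*a + (1-s)*b"
  have "a - m = (1-s)*(a-b)" by (simp add: m_def algebra_simps)
  hence "a - m \<noteq> 0" using assms by auto
  have "b - m = s*(b-a)" by (simp add: m_def algebra_simps)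
  hence "b - m \<noteq> 0" using assms by auto
  have ea: "exp a = exp m * exp (a - m)" by (simp flip: exp_add)
  have eb: "exp b = exp m * exp (b - m)" by (simp flip: exp_add)
  have 1: "exp m * (1 + (a - m)) < exp a"
    using exp_strict_aux[OF \<open>a - m \<noteq> 0\<close>] ea by simp
  have 2: "exp m * (1 + (b - m)) < exp b"
    using exp_strict_aux[OF \<open>b - m \<noteq> 0\<close>] eb by simp
  have "s * (exp m * (1 + (a - m))) + (1-s) * (exp m * (1 + (b - m))) < s * exp a + (1-s) * exp b"
    using 1 2 assms by (intro add_strict_mono mult_strict_left_mono) auto
  moreover have "s * (exp m * (1 + (a - m))) + (1-s) * (exp m * (1 + (b - m))) = exp m"
    by (simp add: m_def algebra_simps)
  ultimately show ?thesis by (simp add: m_def)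
qed



definition tau :: "nat \<Rightarrow> nat \<Rightarrow> nat" where
  "tau i j = (if j = 0 then i else if j = i then 0 else j)"

definition sgnperm :: "nat \<Rightarrow> real \<Rightarrow> (nat \<times> nat \<Rightarrow> real)" where
  "sgnperm i s = (\<lambda>(r, j). if r = tau i j then (if r = 0 then s else 1) else 0)"

lemma tau_inj: "tau i j = tau i k \<longleftrightarrow> j = k"
  by (auto simp: tau_def split: if_splits)

lemma tau_zero: "tau i k = 0 \<longleftrightarrow> k = i"
  by (auto simp: tau_def)

lemma tau_lt: "i < n \<Longrightarrow> j < n \<Longrightarrow> tau i j < n"
  by (auto simp: tau_def)

lemma sgnperm_orth:
  assumes "i < n" "s = 1 \<or> s = -1"
  shows "orthogonal_mat n (sgnperm i s)"
  unfolding orthogonal_mat_def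
proof (intro allI impI)
  fix j k assume jk: "j < n" "k < n"
  have "(\<Sum>r<n. sgnperm i s (r, j) * sgnperm i s (r, k))
      = (\<Sum>r<n. if r = tau i j then (if j = k then 1 else 0) else 0)"
    using assms by (intro sum.cong) (auto simp: sgnperm_def tau_inj)
  also have "\<dots> = (if j = k then 1 else 0)"
    using tau_lt[OF assms(1) jk(1)] by (simp add: sum.delta')
  finally show "(\<Sum>r<n. sgnperm i s (r, j) * sgnperm i s (r, k)) = (if j = k then 1 else 0)" .
qed

lemma left_mult_00:
  assumes "0 < n" "0 < p" "i < n"
  shows "left_mult n p (sgnperm i s) X (0, 0) = s * X (i, 0)"
proof -
  have "left_mult n p (sgnperm i s) X (0, 0) = (\<Sum>k<n. sgnperm i s (0, k) * X (k, 0))"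
    using assms by (simp add: left_mult_def)
  also have "\<dots> = (\<Sum>k<n. if k = i then s * X (k, 0) else 0)"
    by (intro sum.cong) (auto simp: sgnperm_def tau_zero)
  also have "\<dots> = s * X (i, 0)" using assms by (simp add: sum.delta')
  finally show ?thesis .
qed

lemma meas_comp:
  assumes "sets \<mu> = sets (mat_space n p)" "i < n" "j < p"
  shows "(\<lambda>X. X (i, j)) \<in> borel_measurable \<mu>"
proof -
  have "(\<lambda>X. X (i, j)) \<in> borel_measurable (mat_space n p)"
    unfolding mat_space_def using assms by (intro measurable_component_singleton) auto
  then show ?thesis using measurable_cong_sets[OF assms(1) refl] by blast
qed

lemma meas_left_mult:
  assumes "sets \<mu> = sets (mat_space n p)"
  shows "left_mult n p Q \<in> measurable \<mu> (mat_space n p)"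
proof -
  have "left_mult n p Q \<in> measurable (mat_space n p) (mat_space n p)"
    unfolding left_mult_def mat_space_def
    by (intro measurable_restrict) (auto intro!: borel_measurable_sum borel_measurable_times measurable_component_singleton split: prod.splits)
  then show ?thesis using measurable_cong_sets[OF assms(1) refl] by blast
qed

lemma haar_nonconst:
  assumes "1 \<le> p" "p \<le> n" "haar_stiefel n p \<mu>"
  shows "\<not> (AE X in \<mu>. X (0, 0) = c)"
proof
  assume c: "AE X in \<mu>. X (0, 0) = c"
  have ps: "prob_space \<mu>" and sets: "sets \<mu> = sets (mat_space n p)"
    and st: "emeasure \<mu> (stiefel n p) = 1"
    and inv: "\<And>Q. orthogonal_mat n Q \<Longrightarrow> distr \<mu> (mat_space n p) (left_mult n p Q) = \<mu>"
    using assms(3) unfolding haar_stiefel_def by auto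
  interpret prob_space \<mu> by fact
  have stS: "stiefel n p \<in> sets \<mu>"
    using st emeasure_notin_sets by (metis zero_neq_one)
  have AEst: "AE X in \<mu>. X \<in> stiefel n p"
    using AE_in_set_eq_1[OF stS] st by (simp add: emeasure_eq_measure)
  have key: "AE X in \<mu>. s * X (i, 0) = c" if "i < n" "s = 1 \<or> s = -1" for i s
  proof -
    have "AE X in distr \<mu> (mat_space n p) (left_mult n p (sgnperm i s)). X (0, 0) = c"
      unfolding inv[OF sgnperm_orth[OF that]] by (rule c)
    from AE_distrD[OF meas_left_mult[OF sets] this]
    show ?thesis using left_mult_00[of n p i s] that assms(1,2) by simp
  qed
  have A1: "AE X in \<mu>. \<forall>i\<in>{..<n}. X (i, 0) = c"
    using key[of _ 1] by (intro AE_finite_allI) auto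
  have A2: "AE X in \<mu>. - X (0, 0) = c"
    using key[of 0 "-1"] assms(1,2) by simp
  have "AE X in \<mu>. False"
    using A1 A2 AEst
  proof eventually_elim
    case (elim X)
    have "X (0,0) = c" "- X (0,0) = c" using elim assms(1,2) by auto
    hence "c = 0" by simp
    have "(\<Sum>i<n. X (i, 0) * X (i, 0)) = 1"
      using elim(3) assms(1) unfolding stiefel_def by auto
    moreover have "(\<Sum>i<n. X (i, 0) * X (i, 0)) = 0"
      using elim(1) \<open>c = 0\<close> by simp
    ultimately show False by simp
  qed
  then show False by simp
qed



lemma L_affine:
  fixes p :: nat
  assumes "1 \<le> p"
  shows "(\<Sum>j<p. (d(0:=t)) j * X(j,j)) = t * X(0,0) + (\<Sum>j<p. (d(0:=0)) j * (X(j,j)::real))"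
proof -
  have "(\<Sum>j<p. (d(0:=t)) j * X(j,j)) = (\<Sum>j<p. (d(0:=0)) j * X(j,j) + (if j = 0 then t * X(0,0) else 0))"
    by (intro sum.cong) auto
  also have "\<dots> = (\<Sum>j<p. (d(0:=0)) j * X(j,j)) + t * X(0,0)"
  proof -
    have "(\<Sum>j<p. if j = 0 then t * X(0,0) else 0) = t * X(0,0)"
      using assms by (subst sum.delta) auto
    then show ?thesis by (simp add: sum.distrib)
  qed
  finally show ?thesis by simp
qed

context
  fixes n p :: nat and \<mu> :: "(nat \<times> nat \<Rightarrow> real) measure" and d :: "nat \<Rightarrow> real"
  assumes p1: "1 \<le> p" and pn: "p \<le> n" and haar: "haar_stiefel n p \<mu>"
begin

lemma ps: "prob_space \<mu>" and sets_mu: "sets \<mu> = sets (mat_space n p)"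
  using haar unfolding haar_stiefel_def by auto

lemma AEst: "AE X in \<mu>. X \<in> stiefel n p"
proof -
  interpret prob_space \<mu> by (rule ps)
  have st: "emeasure \<mu> (stiefel n p) = 1" using haar unfolding haar_stiefel_def by auto
  have stS: "stiefel n p \<in> sets \<mu>"
    using st emeasure_notin_sets by (metis zero_neq_one)
  show ?thesis
    using AE_in_set_eq_1[OF stS] st by (simp add: emeasure_eq_measure)
qed

lemma diag_bound: "X \<in> stiefel n p \<Longrightarrow> j < p \<Longrightarrow> \<bar>X (j, j)\<bar> \<le> 1"
proof -
  assume X: "X \<in> stiefel n p" and j: "j < p"
  have "(\<Sum>i<n. X (i, j) * X (i, j)) = 1" using X j unfolding stiefel_def by auto
  moreover have "X (j, j) * X (j, j) \<le> (\<Sum>i<n. X (i, j) * X (i, j))"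
    using j pn by (intro member_le_sum[where f="\<lambda>i. X (i, j) * X (i, j)"]) auto
  ultimately have "(X (j, j))^2 \<le> 1" by (simp add: power2_eq_square)
  then show ?thesis by (simp add: abs_square_le_1)
qed

definition E :: "real \<Rightarrow> (nat \<times> nat \<Rightarrow> real) \<Rightarrow> real" where
  "E t X = exp (\<Sum>j<p. (d(0:=t)) j * X(j,j))"

lemma E_meas: "E t \<in> borel_measurable \<mu>"
proof -
  have "(\<lambda>X. (d(0:=t)) j * X(j,j)) \<in> borel_measurable \<mu>" if "j \<in> {..<p}" for j
    using that pn by (intro borel_measurable_times borel_measurable_const meas_comp[OF sets_mu]) auto
  then have "(\<lambda>X. \<Sum>j<p. (d(0:=t)) j * X(j,j)) \<in> borel_measurable \<mu>"
    by (rule borel_measurable_sum)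
  then show ?thesis unfolding E_def by (rule measurable_compose[OF _ borel_measurable_exp])
qed

lemma E_int: "integrable \<mu> (E t)"
proof -
  interpret prob_space \<mu> by (rule ps)
  show ?thesis
  proof (rule integrable_const_bound[where B="exp (\<Sum>j<p. \<bar>(d(0:=t)) j\<bar>)"])
    show "AE X in \<mu>. norm (E t X) \<le> exp (\<Sum>j<p. \<bar>(d(0:=t)) j\<bar>)"
      using AEst
    proof eventually_elim
      case (elim X)
      have "(\<Sum>j<p. (d(0:=t)) j * X(j,j)) \<le> (\<Sum>j<p. \<bar>(d(0:=t)) j\<bar>)"
      proof (intro sum_mono)
        fix j assume "j \<in> {..<p}"
        then have "\<bar>X (j,j)\<bar> \<le> 1" using diag_bound elim by auto
        then have "\<bar>(d(0:=t)) j * X(j,j)\<bar> \<le> \<bar>(d(0:=t)) j\<bar>"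
          by (simp add: abs_mult mult_left_le)
        then show "(d(0:=t)) j * X(j,j) \<le> \<bar>(d(0:=t)) j\<bar>" by linarith
      qed
      then show ?case by (simp add: E_def)
    qed
  qed (rule E_meas)
qed

definition G :: "real \<Rightarrow> real" where "G t = hyp0F1 \<mu> p (d(0:=t))"

lemma G_eq: "G t = (\<integral>X. E t X \<partial>\<mu>)"
  by (simp add: G_def hyp0F1_def E_def)

lemma G_pos: "0 < G t"
proof -
  interpret prob_space \<mu> by (rule ps)
  have "0 \<le> G t" unfolding G_eq by (intro integral_nonneg_AE) (simp add: E_def)
  moreover have "G t \<noteq> 0"
  proof
    assume "G t = 0"
    then have "AE X in \<mu>. E t X = 0"
      using integral_nonneg_eq_0_iff_AE[OF E_int] unfolding G_eq by (simp add: E_def)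
    then have "AE X in \<mu>. False" by (simp add: E_def)
    then show False by simp
  qed
  ultimately show ?thesis by simp
qed


lemma G_strict:
  assumes "x1 \<noteq> x2" "0 < s" "s < 1"
  shows "ln (G (s*x1 + (1-s)*x2)) < s * ln (G x1) + (1-s) * ln (G x2)"
proof -
  interpret prob_space \<mu> by (rule ps)
  define A where "A = G x1"
  define B where "B = G x2"
  define z where "z = s*x1+(1-s)*x2"
  define K where "K = exp (s * ln A + (1-s) * ln B)"
  define C where "C X = (\<Sum>j<p. (d(0:=0)) j * X(j,j))" for X :: "nat \<times> nat \<Rightarrow> real"
  have Ep: "E t X = exp (t * X(0,0) + C X)" for t X
    unfolding E_def C_def by (rule arg_cong[where f=exp], rule L_affine[OF p1])
  define \<alpha> where "\<alpha> X = x1 * X(0,0) + C X - ln A" for X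
  define \<beta> where "\<beta> X = x2 * X(0,0) + C X - ln B" for X
  have Apos: "A > 0" and Bpos: "B > 0" and Kpos: "K > 0"
    using G_pos by (auto simp: A_def B_def K_def)
  have Ez: "E z X = K * exp (s * \<alpha> X + (1-s) * \<beta> X)" for X
  proof -
    have "K * exp (s * \<alpha> X + (1-s) * \<beta> X) = exp (s * ln A + (1-s) * ln B + (s * \<alpha> X + (1-s) * \<beta> X))"
      by (simp add: K_def mult_exp_exp)
    also have "\<dots> = E z X"
      unfolding Ep z_def \<alpha>_def \<beta>_def by (simp add: algebra_simps)
    finally show ?thesis by simp
  qed
  have E1: "E x1 X / A = exp (\<alpha> X)" for X
    using Apos by (simp add: \<alpha>_def Ep exp_diff)
  have E2: "E x2 X / B = exp (\<beta> X)" for X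
    using Bpos by (simp add: \<beta>_def Ep exp_diff)
  define h where "h X = K * (s * (E x1 X / A) + (1-s) * (E x2 X / B)) - E z X" for X
  have h_eq: "h X = K * (s * exp (\<alpha> X) + (1-s) * exp (\<beta> X) - exp (s * \<alpha> X + (1-s) * \<beta> X))" for X
    unfolding h_def E1 E2 Ez by (simp add: algebra_simps)
  have h_nonneg: "0 \<le> h X" and h_pos: "\<alpha> X \<noteq> \<beta> X \<Longrightarrow> 0 < h X" for X
  proof -
    show "\<alpha> X \<noteq> \<beta> X \<Longrightarrow> 0 < h X"
      unfolding h_eq using exp_strict_convex[of "\<alpha> X" "\<beta> X" s] assms Kpos by simp
    show "0 \<le> h X"
    proof (cases "\<alpha> X = \<beta> X")
      case True
      have "s * \<alpha> X + (1 - s) * \<alpha> X = \<alpha> X" by (simp add: algebra_simps)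
      then show ?thesis unfolding h_eq True by (simp add: algebra_simps)
    next
      case False
      then show ?thesis
        unfolding h_eq using exp_strict_convex[of "\<alpha> X" "\<beta> X" s] assms Kpos by simp
    qed
  qed
  have int_h: "integrable \<mu> h"
    unfolding h_def using E_int by auto
  have integral_h: "integral\<^sup>L \<mu> h = K - G z"
  proof -
    have "integral\<^sup>L \<mu> h = K * (s * (integral\<^sup>L \<mu> (E x1) / A) + (1-s) * (integral\<^sup>L \<mu> (E x2) / B)) - integral\<^sup>L \<mu> (E z)"
      unfolding h_def using E_int by simp
    also have "\<dots> = K - G z"
      using Apos Bpos by (simp add: G_eq[symmetric] A_def[symmetric] B_def[symmetric] algebra_simps)
    finally show ?thesis .
  qed
  have "integral\<^sup>L \<mu> h \<noteq> 0"
  proof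
    assume "integral\<^sup>L \<mu> h = 0"
    then have "AE X in \<mu>. h X = 0"
      using integral_nonneg_eq_0_iff_AE[OF int_h] h_nonneg by simp
    then have "AE X in \<mu>. X (0,0) = (ln A - ln B) / (x1 - x2)"
    proof eventually_elim
      case (elim X)
      then have "\<alpha> X = \<beta> X" using h_pos by force
      then have "(x1 - x2) * X(0,0) = ln A - ln B" by (simp add: \<alpha>_def \<beta>_def algebra_simps)
      then show ?case using assms(1) by (simp add: field_simps)
    qed
    then show False using haar_nonconst[OF p1 pn haar] by blast
  qed
  moreover have "0 \<le> integral\<^sup>L \<mu> h" by (rule integral_nonneg_AE) (simp add: h_nonneg)
  ultimately have "G z < K" using integral_h by simp
  then have "ln (G z) < ln K" using G_pos[of z] by (intro ln_less_cancel_iff[THEN iffD2]) auto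
  then show ?thesis by (simp add: K_def z_def A_def B_def)
qed


lemma hyp_pos: "0 < hyp0F1 \<mu> p (d(0:=t))"
  using G_pos[of t] by (simp add: G_def)

lemma main_ineq:
  assumes b: "b > 0" and xy: "x < y"
  shows "ln (hyp0F1 \<mu> p (d(0:=x+b))) + ln (hyp0F1 \<mu> p (d(0:=y)))
       < ln (hyp0F1 \<mu> p (d(0:=x))) + ln (hyp0F1 \<mu> p (d(0:=y+b)))"
proof -
  define t where "t = b / (y + b - x)"
  have t0: "0 < t" and t1: "t < 1" using b xy by (auto simp: t_def field_simps)
  have tt: "t * (y + b - x) = b" using b xy by (simp add: t_def)
  have "(1-t) * x + (1 - (1-t)) * (y+b) = x + t * (y + b - x)" by (simp add: algebra_simps)
  then have e1: "(1-t) * x + (1 - (1-t)) * (y+b) = x + b" using tt by simp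
  have "t * x + (1 - t) * (y+b) = (y + b) - t * (y + b - x)" by (simp add: algebra_simps)
  then have e2: "t * x + (1 - t) * (y+b) = y" using tt by simp
  have "x \<noteq> y + b" using b xy by simp
  from G_strict[OF this, of "1-t"] t0 t1 e1
  have 1: "ln (G (x+b)) < (1-t) * ln (G x) + t * ln (G (y+b))" by simp
  from G_strict[OF \<open>x \<noteq> y + b\<close>, of t] t0 t1 e2
  have 2: "ln (G y) < t * ln (G x) + (1-t) * ln (G (y+b))" by simp
  from 1 2 have "ln (G (x+b)) + ln (G y) < ln (G x) + ln (G (y+b))"
    by (simp add: algebra_simps)
  then show ?thesis by (simp add: G_def)
qed

end


theorem lemma10:
  fixes n p :: nat and \<nu> m :: real and \<eta> d :: "nat \<Rightarrow> real"
    and \<mu> :: "(nat \<times> nat \<Rightarrow> real) measure"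
  assumes "1 \<le> p" and "p \<le> n"
    and "haar_stiefel n p \<mu>"
    and "\<nu> > 0"
    and "\<forall>j<p. \<eta> j < 1"
    and "\<forall>j. 1 \<le> j \<and> j < p \<longrightarrow> d j > 0"
    and mode: "m \<ge> 0" "\<forall>x\<ge>0. g1 \<mu> p \<nu> \<eta> d x \<le> g1 \<mu> p \<nu> \<eta> d m"
  shows "\<forall>b>0. \<forall>x y. m < x \<and> x < y \<longrightarrow>
           g1 \<mu> p \<nu> \<eta> d (y + b) / g1 \<mu> p \<nu> \<eta> d y
             < g1 \<mu> p \<nu> \<eta> d (x + b) / g1 \<mu> p \<nu> \<eta> d x"
proof (intro allI impI)
  fix b x y :: real
  assume b: "b > 0" and xy: "m < x \<and> x < y"
  define H where "H t = hyp0F1 \<mu> p (d(0:=t))" for t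
  have Hpos: "0 < H t" for t
    unfolding H_def by (rule hyp_pos[OF assms(1,2,3)])
  have g: "g1 \<mu> p \<nu> \<eta> d t = exp (\<nu> * \<eta> 0 * t - \<nu> * ln (H t))" for t
    using Hpos[of t] by (simp add: g1_def H_def[symmetric] powr_def exp_diff)
  have r: "g1 \<mu> p \<nu> \<eta> d (t + b) / g1 \<mu> p \<nu> \<eta> d t
      = exp (\<nu> * \<eta> 0 * b - \<nu> * (ln (H (t + b)) - ln (H t)))" for t
    unfolding g by (simp add: exp_diff[symmetric] algebra_simps)
  have "ln (H (x+b)) + ln (H y) < ln (H x) + ln (H (y+b))"
    unfolding H_def using main_ineq[OF assms(1,2,3) b] xy by blast
  then have "\<nu> * (ln (H (x + b)) - ln (H x)) < \<nu> * (ln (H (y + b)) - ln (H y))"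
    using assms(4) by (intro mult_strict_left_mono) auto
  then show "g1 \<mu> p \<nu> \<eta> d (y + b) / g1 \<mu> p \<nu> \<eta> d y
             < g1 \<mu> p \<nu> \<eta> d (x + b) / g1 \<mu> p \<nu> \<eta> d x"
    unfolding r by simp
qed


end
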